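(* Let $A$ be a unital C*-algebra, let $f\in A$ be self-adjoint, and let $\varepsilon>0$. Then there exist $n\in\mathbb N$, $\delta>0$ and self-adjoint $f_1,\dots,f_n\in A$ such that $\|f-f_i\|<\varepsilon$ for $i=1,\dots,n$, and $\frac1n(\tau(\chi_\delta(f_1))+\cdots+\tau(\chi_\delta(f_n)))<\varepsilon$ for all tracial states $\tau\in\mathrm{T}(A)$.
   Context: $\chi_\delta\colon\mathbb R\to\mathbb R$ is the continuous function equal to $1$ on $\{|t|<\delta/2\}$, $0$ on $\{|t|>\delta\}$, and linear otherwise; $\chi_\delta(f_i)$ is defined by continuous functional calculus. *)

theory Defs
  imports "HOL-Analysis.Analysis" "HOL-Computational_Algebra.Polynomial"
begin

class cstar_algebra = real_normed_algebra_1 + banach +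
  fixes cscale :: "complex \<Rightarrow> 'a \<Rightarrow> 'a"
    and cstar :: "'a \<Rightarrow> 'a"
  assumes cscale_of_real: "cscale (complex_of_real r) x = r *\<^sub>R x"
    and cscale_add_left: "cscale (a + b) x = cscale a x + cscale b x"
    and cscale_add_right: "cscale a (x + y) = cscale a x + cscale a y"
    and cscale_cscale: "cscale a (cscale b x) = cscale (a * b) x"
    and cscale_mult_left: "cscale a (x * y) = cscale a x * y"
    and cscale_mult_right: "cscale a (x * y) = x * cscale a y"
    and norm_cscale: "norm (cscale a x) = cmod a * norm x"
    and cstar_cstar: "cstar (cstar x) = x"
    and cstar_add: "cstar (x + y) = cstar x + cstar y"
    and cstar_cscale: "cstar (cscale a x) = cscale (cnj a) (cstar x)"
    and cstar_mult: "cstar (x * y) = cstar y * cstar x"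
    and cstar_identity: "norm (cstar x * x) = (norm x)^2"

definition self_adjoint :: "'a::cstar_algebra \<Rightarrow> bool" where
  "self_adjoint x \<longleftrightarrow> cstar x = x"

definition invertible_el :: "'a::ring_1 \<Rightarrow> bool" where
  "invertible_el x \<longleftrightarrow> (\<exists>y. x * y = 1 \<and> y * x = 1)"

definition cspectrum :: "'a::cstar_algebra \<Rightarrow> complex set" where
  "cspectrum x = {c. \<not> invertible_el (x - cscale c 1)}"

definition alg_poly :: "real poly \<Rightarrow> 'a::real_normed_algebra_1 \<Rightarrow> 'a" where
  "alg_poly p x = (\<Sum>i\<le>degree p. coeff p i *\<^sub>R x ^ i)"

definition cfc :: "(real \<Rightarrow> real) \<Rightarrow> 'a::cstar_algebra \<Rightarrow> 'a" where
  "cfc g x = (THE y. \<forall>p :: nat \<Rightarrow> real poly.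
      uniform_limit {t. complex_of_real t \<in> cspectrum x} (\<lambda>k t. poly (p k) t) g sequentially
      \<longrightarrow> (\<lambda>k. alg_poly (p k) x) \<longlonglongrightarrow> y)"

definition chi :: "real \<Rightarrow> real \<Rightarrow> real" where
  "chi \<delta> t = (if \<bar>t\<bar> < \<delta> / 2 then 1 else if \<bar>t\<bar> > \<delta> then 0 else 2 - 2 * \<bar>t\<bar> / \<delta>)"

definition tracial_state :: "('a::cstar_algebra \<Rightarrow> complex) \<Rightarrow> bool" where
  "tracial_state \<tau> \<longleftrightarrow>
     (\<forall>x y. \<tau> (x + y) = \<tau> x + \<tau> y) \<and>
     (\<forall>c x. \<tau> (cscale c x) = c * \<tau> x) \<and>
     (\<forall>x. Im (\<tau> (cstar x * x)) = 0 \<and> Re (\<tau> (cstar x * x)) \<ge> 0) \<and>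
     \<tau> 1 = 1 \<and>
     (\<forall>x y. \<tau> (x * y) = \<tau> (y * x))"

end

theory Submission
  imports Defs "HOL-Computational_Algebra.Fundamental_Theorem_Algebra"
begin

lemma cscale_zero_left [simp]: "cscale 0 (x::'a::cstar_algebra) = 0"
  using cscale_of_real[of 0 x] by simp

lemma cscale_one_left [simp]: "cscale 1 (x::'a::cstar_algebra) = x"
  using cscale_of_real[of 1 x] by simp

lemma cscale_zero_right [simp]: "cscale c (0::'a::cstar_algebra) = 0"
  using cscale_add_right[of c 0 0] by simp

lemma cscale_minus_right: "cscale c (- x::'a::cstar_algebra) = - cscale c x"
  using cscale_add_right[of c x "-x"] by (simp add: add.inverse_unique)

lemma cscale_diff_right: "cscale c (x - y::'a::cstar_algebra) = cscale c x - cscale c y"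
  using cscale_add_right[of c x "-y"] by (simp add: cscale_minus_right)

lemma cscale_minus_left: "cscale (- c) (x::'a::cstar_algebra) = - cscale c x"
  using cscale_add_left[of c "-c" x] by (simp add: add.inverse_unique)

lemma cscale_diff_left: "cscale (a - b) (x::'a::cstar_algebra) = cscale a x - cscale b x"
  using cscale_add_left[of a "-b" x] by (simp add: cscale_minus_left)

lemma cscale_sum_right: "cscale c (sum f A) = (\<Sum>i\<in>A. cscale c (f i::'a::cstar_algebra))"
  by (induction A rule: infinite_finite_induct) (auto simp: cscale_add_right)

lemma cscale_sum_left: "cscale (sum f A) (x::'a::cstar_algebra) = (\<Sum>i\<in>A. cscale (f i) x)"
  by (induction A rule: infinite_finite_induct) (auto simp: cscale_add_left)

lemma cscale_as_mult: "cscale c (x::'a::cstar_algebra) = cscale c 1 * x"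
  using cscale_mult_left[of c 1 x] by simp

lemma cscale_as_mult': "cscale c (x::'a::cstar_algebra) = x * cscale c 1"
  using cscale_mult_right[of c x 1] by simp

lemma cscale_one_mult: "cscale a 1 * cscale b (1::'a::cstar_algebra) = cscale (a*b) 1"
  by (metis cscale_as_mult cscale_cscale)

lemma scaleR_cscale: "r *\<^sub>R (x::'a::cstar_algebra) = cscale (of_real r) x"
  by (simp add: cscale_of_real)

lemma cstar_zero [simp]: "cstar (0::'a::cstar_algebra) = 0"
  using cstar_add[of 0 0] by simp

lemma cstar_minus: "cstar (- x::'a::cstar_algebra) = - cstar x"
  using cstar_add[of x "-x"] by (simp add: add.inverse_unique)

lemma cstar_diff: "cstar (x - y::'a::cstar_algebra) = cstar x - cstar y"
  using cstar_add[of x "-y"] by (simp add: cstar_minus)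

lemma cstar_one [simp]: "cstar (1::'a::cstar_algebra) = 1"
proof -
  have "(1::'a) = cstar (cstar 1)" by (simp add: cstar_cstar)
  also have "\<dots> = cstar (cstar 1 * 1)" by simp
  also have "\<dots> = cstar 1 * cstar (cstar 1)" by (simp only: cstar_mult)
  also have "\<dots> = cstar 1" by (simp add: cstar_cstar)
  finally show ?thesis by simp
qed

lemma cstar_scaleR: "cstar (r *\<^sub>R x::'a::cstar_algebra) = r *\<^sub>R cstar x"
  by (simp add: scaleR_cscale cstar_cscale)

lemma cstar_cscale1: "cstar (cscale c (1::'a::cstar_algebra)) = cscale (cnj c) 1"
  by (simp add: cstar_cscale)

lemma cstar_sum: "cstar (sum f A) = (\<Sum>i\<in>A. cstar (f i::'a::cstar_algebra))"
  by (induction A rule: infinite_finite_induct) (auto simp: cstar_add)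

lemma cstar_power: "cstar ((x::'a::cstar_algebra) ^ n) = cstar x ^ n"
proof (induction n)
  case (Suc n)
  have "cstar (x ^ Suc n) = cstar (x^n * x)" by (simp add: power_commutes)
  also have "\<dots> = cstar x * cstar x ^ n" by (simp add: cstar_mult Suc)
  finally show ?case by simp
qed simp

lemma norm_cstar [simp]: "norm (cstar (x::'a::cstar_algebra)) = norm x"
proof -
  have le: "norm y \<le> norm (cstar y)" for y :: 'a
  proof (cases "y = 0")
    case False
    have "(norm y)^2 = norm (cstar y * y)" by (simp add: cstar_identity)
    also have "\<dots> \<le> norm (cstar y) * norm y" by (rule norm_mult_ineq)
    finally have "norm y * norm y \<le> norm (cstar y) * norm y" by (simp add: power2_eq_square)
    thus ?thesis using False by simp
  qed simp
  show ?thesis using le[of x] le[of "cstar x"] by (simp add: cstar_cstar)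
qed

lemma tendsto_cstar:
  assumes "(y \<longlongrightarrow> (l::'a::cstar_algebra)) F"
  shows "((\<lambda>k. cstar (y k)) \<longlongrightarrow> cstar l) F"
proof -
  have "((\<lambda>k. y k - l) \<longlongrightarrow> 0) F" using assms by (simp add: LIM_zero)
  hence "((\<lambda>k. norm (y k - l)) \<longlongrightarrow> 0) F" using tendsto_norm_zero by blast
  hence "((\<lambda>k. norm (cstar (y k) - cstar l)) \<longlongrightarrow> 0) F"
    by (simp add: cstar_diff[symmetric])
  thus ?thesis using tendsto_norm_zero_iff LIM_zero_cancel by blast
qed

lemma norm_cscale1: "norm (cscale c (1::'a::cstar_algebra)) = cmod c"
  by (simp add: norm_cscale)

section \<open>Invertibility\<close>

lemma invertible_one [simp]: "invertible_el (1::'a::ring_1)"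
  unfolding invertible_el_def by auto

lemma invertible_mult:
  assumes "invertible_el (x::'a::ring_1)" "invertible_el y"
  shows "invertible_el (x * y)"
proof -
  obtain a where a: "x * a = 1" "a * x = 1" using assms(1) unfolding invertible_el_def by blast
  obtain b where b: "y * b = 1" "b * y = 1" using assms(2) unfolding invertible_el_def by blast
  have "x * y * (b * a) = 1" by (metis a(1) b(1) mult.assoc mult_1_left)
  moreover have "b * a * (x * y) = 1" by (metis a(2) b(2) mult.assoc mult_1_left)
  ultimately show ?thesis unfolding invertible_el_def by blast
qed

definition inv_el :: "'a::ring_1 \<Rightarrow> 'a" where
  "inv_el x = (SOME y. x * y = 1 \<and> y * x = 1)"

lemma inv_el:
  assumes "invertible_el x"
  shows "x * inv_el x = 1" "inv_el x * x = 1"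
  using someI_ex[OF assms[unfolded invertible_el_def]] unfolding inv_el_def by auto

lemma inv_el_unique:
  assumes "x * y = 1" "y * (x::'a::ring_1) = 1"
  shows "inv_el x = y"
proof -
  have i: "invertible_el x" using assms unfolding invertible_el_def by blast
  have "inv_el x = inv_el x * (x * y)" using assms by simp
  also have "\<dots> = y" using inv_el(2)[OF i] by (simp add: mult.assoc[symmetric])
  finally show ?thesis .
qed

lemma not_invertible_zero: "\<not> invertible_el (0::'a::real_normed_algebra_1)"
  unfolding invertible_el_def by simp

lemma invertible_cscale1:
  assumes "c \<noteq> 0"
  shows "invertible_el (cscale c (1::'a::cstar_algebra))"
  unfolding invertible_el_def
  by (rule exI[of _ "cscale (1/c) 1"]) (use assms in \<open>simp add: cscale_one_mult\<close>)

lemma neumann: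
  fixes y :: "'a::cstar_algebra"
  assumes "norm y < 1"
  shows "invertible_el (1 - y)" "norm (inv_el (1 - y)) \<le> 1 / (1 - norm y)"
        "norm (inv_el (1 - y) - 1) \<le> norm y / (1 - norm y)"
proof -
  have sn: "summable (\<lambda>n. norm y ^ n)" using assms by (simp add: summable_geometric)
  have s1: "summable (\<lambda>n. norm (y ^ n))"
    by (rule summable_comparison_test[OF _ sn]) (auto intro: norm_power_ineq)
  have s: "summable (\<lambda>n. y ^ n)" by (rule summable_norm_cancel[OF s1])
  define z where "z = (\<Sum>n. y ^ n)"
  have "(\<lambda>n. \<Sum>i<n. y ^ i) \<longlonglongrightarrow> z" using s unfolding z_def by (simp add: summable_LIMSEQ)
  have lim0: "(\<lambda>n. y ^ n) \<longlonglongrightarrow> 0"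
  proof -
    have "(\<lambda>n. norm y ^ n) \<longlonglongrightarrow> 0" using assms by (simp add: LIMSEQ_power_zero)
    thus ?thesis
      by (rule Lim_null_comparison[rotated]) (auto intro: norm_power_ineq always_eventually)
  qed
  have t1: "(\<lambda>n. (1 - y) * (\<Sum>i<n. y ^ i)) \<longlonglongrightarrow> (1 - y) * z"
    using \<open>(\<lambda>n. \<Sum>i<n. y ^ i) \<longlonglongrightarrow> z\<close> by (intro tendsto_intros)
  have e1: "(1 - y) * (\<Sum>i<n. y ^ i) = 1 - y ^ n" for n
  proof (induction n)
    case (Suc n)
    have "(1 - y) * (\<Sum>i<Suc n. y ^ i) = (1 - y) * (\<Sum>i<n. y ^ i) + (1 - y) * y ^ n"
      by (simp add: distrib_left)
    also have "\<dots> = 1 - y ^ Suc n" using Suc by (simp add: algebra_simps)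
    finally show ?case .
  qed simp
  have "(\<lambda>n. 1 - y ^ n) \<longlonglongrightarrow> 1 - 0" by (intro tendsto_intros lim0)
  hence zr: "(1 - y) * z = 1" using t1 e1 LIMSEQ_unique by fastforce
  have t2: "(\<lambda>n. (\<Sum>i<n. y ^ i) * (1 - y)) \<longlonglongrightarrow> z * (1 - y)"
    using \<open>(\<lambda>n. \<Sum>i<n. y ^ i) \<longlonglongrightarrow> z\<close> by (intro tendsto_intros)
  have e2: "(\<Sum>i<n. y ^ i) * (1 - y) = 1 - y ^ n" for n
  proof (induction n)
    case (Suc n)
    have "(\<Sum>i<Suc n. y ^ i) * (1 - y) = (\<Sum>i<n. y ^ i) * (1 - y) + y ^ n * (1 - y)"
      by (simp add: distrib_right)
    also have "\<dots> = 1 - y ^ Suc n" using Suc by (simp add: algebra_simps power_commutes)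
    finally show ?case .
  qed simp
  hence zl: "z * (1 - y) = 1" using t2 \<open>(\<lambda>n. 1 - y ^ n) \<longlonglongrightarrow> 1 - 0\<close> LIMSEQ_unique by fastforce
  show "invertible_el (1 - y)" unfolding invertible_el_def using zr zl by blast
  have iz: "inv_el (1 - y) = z" by (rule inv_el_unique[OF zr zl])
  have "norm z \<le> (\<Sum>n. norm (y ^ n))" unfolding z_def by (rule summable_norm[OF s1])
  also have "\<dots> \<le> (\<Sum>n. norm y ^ n)" by (rule suminf_le[OF _ s1 sn]) (rule norm_power_ineq)
  also have "\<dots> = 1 / (1 - norm y)" using assms by (simp add: suminf_geometric)
  finally have nz: "norm z \<le> 1 / (1 - norm y)" .
  thus "norm (inv_el (1 - y)) \<le> 1 / (1 - norm y)" using iz by simp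
  have "z - 1 = z * y" using zl by (simp add: algebra_simps)
  hence "norm (z - 1) \<le> norm z * norm y" by (simp add: norm_mult_ineq)
  also have "\<dots> \<le> 1 / (1 - norm y) * norm y"
    using nz by (intro mult_right_mono) auto
  finally show "norm (inv_el (1 - y) - 1) \<le> norm y / (1 - norm y)" using iz by simp
qed


lemma inv_perturb:
  fixes u w :: "'a::cstar_algebra"
  assumes iu: "invertible_el u" and small: "norm (inv_el u) * norm (w - u) < 1"
  shows "invertible_el w"
    "norm (inv_el w - inv_el u) \<le> norm (inv_el u)^2 * norm (w - u) / (1 - norm (inv_el u) * norm (w - u))"
proof -
  define v where "v = inv_el u"
  define e where "e = v * (u - w)"
  have ne: "norm e \<le> norm v * norm (w - u)"
    unfolding e_def by (metis norm_minus_commute norm_mult_ineq)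
  hence ne1: "norm e < 1" using small v_def by simp
  have uv: "u * v = 1" "v * u = 1" using inv_el[OF iu] v_def by auto
  have wdec: "w = u * (1 - e)"
    unfolding e_def by (simp add: algebra_simps uv mult.assoc[symmetric])
  have i1: "invertible_el (1 - e)" using neumann(1)[OF ne1] .
  define z where "z = inv_el (1 - e)"
  have zz: "(1 - e) * z = 1" "z * (1 - e) = 1" using inv_el[OF i1] z_def by auto
  have "w * (z * v) = 1"
    by (simp add: wdec mult.assoc[symmetric]) (metis mult.assoc mult_1_right uv(1) zz(1))
  moreover have "z * v * w = 1"
    by (simp add: wdec mult.assoc[symmetric]) (metis mult.assoc mult_1_left uv(2) zz(2))
  ultimately have iw: "inv_el w = z * v" using inv_el_unique by blast
  show "invertible_el w" unfolding invertible_el_def using \<open>w * (z * v) = 1\<close> \<open>z * v * w = 1\<close> by blast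
  have "z - 1 = z * e" using zz(2) by (simp add: algebra_simps)
  hence "z = 1 + z * e" by (simp add: algebra_simps)
  hence "z * v = (1 + z * e) * v" by simp
  hence "z * v = v + z * e * v" by (simp add: distrib_right)
  hence "inv_el w - v = z * e * v" using iw by simp
  hence "norm (inv_el w - v) \<le> norm z * norm e * norm v"
    by (metis norm_mult_ineq mult_right_mono norm_ge_zero order_trans)
  also have "\<dots> \<le> (1 / (1 - norm e)) * (norm v * norm (w - u)) * norm v"
    using neumann(2)[OF ne1] ne ne1 z_def by (intro mult_mono) auto
  also have "\<dots> \<le> (1 / (1 - norm v * norm (w - u))) * (norm v * norm (w - u)) * norm v"
  proof -
    have "1 / (1 - norm e) \<le> 1 / (1 - norm v * norm (w - u))"
      using ne ne1 small v_def by (intro divide_left_mono) auto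
    thus ?thesis by (intro mult_right_mono) auto
  qed
  finally show "norm (inv_el w - inv_el u) \<le> norm (inv_el u)^2 * norm (w - u) / (1 - norm (inv_el u) * norm (w - u))"
    using v_def by (simp add: power2_eq_square field_simps)
qed

lemma continuous_on_inv_el:
  fixes K :: "'b::metric_space set"
  assumes "\<forall>z\<in>K. invertible_el (F z :: 'a::cstar_algebra)" and cF: "continuous_on K F"
  shows "continuous_on K (\<lambda>z. inv_el (F z))"
  unfolding continuous_on_iff
proof (intro ballI allI impI)
  fix z e assume zK: "z \<in> K" and e: "(0::real) < e"
  define u where "u = F z"
  have iu: "invertible_el u" using assms zK u_def by auto
  define m where "m = norm (inv_el u)"
  define d where "d = min (1 / (2 * (m + 1))) (e / (4 * (m + 1)^2))"
  have m0: "m \<ge> 0" using m_def by simp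
  have d0: "d > 0" using e m0 by (simp add: d_def)
  obtain d' where d': "d' > 0" "\<forall>y\<in>K. dist y z < d' \<longrightarrow> dist (F y) (F z) < d"
    using cF zK d0 unfolding continuous_on_iff by blast
  show "\<exists>d>0. \<forall>x'\<in>K. dist x' z < d \<longrightarrow> dist (inv_el (F x')) (inv_el (F z)) < e"
  proof (intro exI[of _ d'] conjI ballI impI d')
    fix y assume yK: "y \<in> K" and dy: "dist y z < d'"
    have nd: "norm (F y - u) < d" using d' yK dy u_def by (simp add: dist_norm)
    have "m * norm (F y - u) \<le> m * d" using nd m0 by (intro mult_left_mono) auto
    also have "\<dots> \<le> (m+1) * (1 / (2 * (m + 1)))" using m0 d0
      by (intro mult_mono) (auto simp: d_def)
    also have "\<dots> = 1/2" using m0 by simp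
    finally have sm: "m * norm (F y - u) \<le> 1/2" .
    have b: "norm (inv_el (F y) - inv_el u) \<le> m^2 * norm (F y - u) / (1 - m * norm (F y - u))"
      using inv_perturb(2)[OF iu, of "F y"] sm m_def by simp
    also have "\<dots> \<le> m^2 * norm (F y - u) / (1/2)"
      using sm m0 by (intro divide_left_mono) auto
    also have "\<dots> \<le> (m+1)^2 * d * 2"
    proof -
      have "m^2 * norm (F y - u) \<le> (m+1)^2 * d"
        using nd m0 by (intro mult_mono power_mono) auto
      thus ?thesis by simp
    qed
    also have "\<dots> \<le> (m+1)^2 * (e / (4 * (m + 1)^2)) * 2"
      using m0 by (intro mult_right_mono mult_left_mono) (auto simp: d_def)
    also have "\<dots> = e/2" using m0 by (simp add: field_simps)
    finally have "norm (inv_el (F y) - inv_el u) \<le> e/2" .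
    thus "dist (inv_el (F y)) (inv_el (F z)) < e"
      using e u_def by (simp add: dist_norm)
  qed
qed

section \<open>Spectrum\<close>

lemma cspectrum_iff: "c \<in> cspectrum x \<longleftrightarrow> \<not> invertible_el (x - cscale c 1)"
  by (simp add: cspectrum_def)

lemma cscale1_mult: "cscale a 1 * (z::'a::cstar_algebra) = cscale a z"
  by (rule cscale_as_mult[symmetric])

lemma mult_cscale1: "(z::'a::cstar_algebra) * cscale a 1 = cscale a z"
  by (rule cscale_as_mult'[symmetric])

lemma cspectrum_bound:
  fixes x :: "'a::cstar_algebra"
  assumes "c \<in> cspectrum x"
  shows "cmod c \<le> norm x"
proof (rule ccontr)
  assume "\<not> cmod c \<le> norm x"
  hence lt: "norm x < cmod c" by simp
  hence c0: "c \<noteq> 0" by auto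
  have "norm (cscale (1/c) x) = norm x / cmod c" by (simp add: norm_cscale norm_divide)
  also have "\<dots> < 1" using lt c0 by simp
  finally have i2: "invertible_el (1 - cscale (1/c) x)" by (rule neumann(1))
  have i1: "invertible_el (cscale (-c) (1::'a))" using c0 by (simp add: invertible_cscale1)
  have "cscale (-c) 1 * (1 - cscale (1/c) x) = x - cscale c (1::'a)"
    using c0 by (simp add: right_diff_distrib cscale1_mult cscale_cscale cscale_minus_left)
  hence "invertible_el (x - cscale c 1)" using invertible_mult[OF i1 i2] by simp
  thus False using assms by (simp add: cspectrum_iff)
qed

lemma selfadjoint_cspectrum_real:
  fixes x :: "'a::cstar_algebra"
  assumes sa: "self_adjoint x" and c: "c \<in> cspectrum x"
  shows "Im c = 0"
proof (rule ccontr)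
  assume im: "Im c \<noteq> 0"
  define t where "t = (norm x ^ 2 + 1) / (2 * Im c)"
  define y where "y = x + cscale (\<i> * of_real t) (1::'a)"
  have "y - cscale (c + \<i> * of_real t) 1 = x - cscale c 1"
    by (simp add: y_def cscale_add_left)
  hence "c + \<i> * of_real t \<in> cspectrum y" using c by (simp add: cspectrum_iff)
  hence b1: "cmod (c + \<i> * of_real t) \<le> norm y" by (rule cspectrum_bound)
  have cy: "cstar y = x + cscale (- (\<i> * of_real t)) 1"
    using sa by (simp add: y_def cstar_add cstar_cscale self_adjoint_def)
  have "cstar y * y = x * x + cscale (of_real (t^2)) (1::'a)"
  proof -
    have ii: "\<i> * of_real t * (\<i> * of_real t) = - (of_real t * of_real t :: complex)"
      by (simp add: algebra_simps)
    have "cstar y * y = x * x + x * cscale (\<i> * of_real t) 1 + cscale (- (\<i> * of_real t)) 1 * x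
        + cscale (- (\<i> * of_real t)) 1 * cscale (\<i> * of_real t) (1::'a)"
      unfolding cy by (simp add: y_def algebra_simps)
    also have "\<dots> = x * x + cscale (of_real (t^2)) (1::'a)"
      using ii by (simp add: cscale1_mult mult_cscale1 cscale_cscale cscale_minus_left cscale_minus_right power2_eq_square)
    finally show ?thesis .
  qed
  hence "(norm y)^2 = norm (x * x + cscale (of_real (t^2)) (1::'a))" by (simp add: cstar_identity[symmetric])
  also have "\<dots> \<le> norm (x * x) + t^2" using norm_triangle_ineq[of "x*x" "cscale (of_real (t^2)) (1::'a)"]
    by (simp add: norm_cscale norm_power)
  also have "\<dots> \<le> (norm x)^2 + t^2" using norm_mult_ineq[of x x] by (simp add: power2_eq_square)
  finally have b2: "(norm y)^2 \<le> (norm x)^2 + t^2" .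
  have "(cmod (c + \<i> * of_real t))^2 \<le> (norm y)^2" using b1 by (simp add: power_mono)
  also note b2
  finally have "(cmod (c + \<i> * of_real t))^2 \<le> (norm x)^2 + t^2" .
  moreover have "(cmod (c + \<i> * of_real t))^2 = (Re c)^2 + (Im c + t)^2"
    by (simp add: cmod_power2)
  ultimately have "(Re c)^2 + (Im c)^2 + 2 * t * Im c \<le> (norm x)^2"
    by (simp add: power2_eq_square algebra_simps)
  moreover have "2 * t * Im c = norm x ^ 2 + 1" using im by (simp add: t_def)
  moreover have "(Re c)^2 + (Im c)^2 \<ge> 0" by simp
  ultimately show False by linarith
qed


lemma two_point:
  fixes y :: "'a::cstar_algebra"
  assumes i1: "invertible_el (1 - y)" and i2: "invertible_el (1 + y)"
  shows "invertible_el (1 - y * y)"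
        "(1/2) *\<^sub>R (inv_el (1 - y) + inv_el (1 + y)) = inv_el (1 - y * y)"
proof -
  define u where "u = 1 - y"
  define v where "v = 1 + y"
  have uv: "u * v = 1 - y * y" "v * u = 1 - y * y" by (simp_all add: u_def v_def algebra_simps)
  show inv: "invertible_el (1 - y * y)" using invertible_mult[OF i1 i2] uv by (simp add: u_def v_def)
  have a: "inv_el u * u = 1" "u * inv_el u = 1" "inv_el v * v = 1" "v * inv_el v = 1"
    using inv_el[OF i1] inv_el[OF i2] by (auto simp: u_def v_def)
  have "(inv_el u + inv_el v) * (1 - y * y) = inv_el u * (u * v) + inv_el v * (v * u)"
    by (simp add: uv distrib_right)
  also have "\<dots> = v + u" by (simp add: mult.assoc[symmetric] a)
  also have "\<dots> = 2" by (simp add: u_def v_def)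
  finally have l: "(inv_el u + inv_el v) * (1 - y * y) = 2" .
  have "(1 - y * y) * (inv_el u + inv_el v) = (v * u) * inv_el u + (u * v) * inv_el v"
    by (simp add: uv distrib_left)
  also have "\<dots> = v + u" by (simp add: mult.assoc a)
  also have "\<dots> = 2" by (simp add: u_def v_def)
  finally have r: "(1 - y * y) * (inv_el u + inv_el v) = 2" .
  have h2: "(1/2::real) *\<^sub>R (2::'a) = 1"
  proof -
    have "(1/2::real) *\<^sub>R (2::'a) = (1/2::real) *\<^sub>R ((2::real) *\<^sub>R (1::'a))"
      by (simp add: scaleR_2)
    also have "\<dots> = 1" by (simp only: scaleR_scaleR) simp
    finally show ?thesis .
  qed
  have "inv_el (1 - y * y) = (1/2) *\<^sub>R (inv_el u + inv_el v)"
  proof (rule inv_el_unique)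
    show "(1 - y * y) * ((1/2) *\<^sub>R (inv_el u + inv_el v)) = 1"
      using r h2 by (simp only: mult_scaleR_right)
    show "(1/2) *\<^sub>R (inv_el u + inv_el v) * (1 - y * y) = 1"
      using l h2 by (simp only: mult_scaleR_left)
  qed
  thus "(1/2) *\<^sub>R (inv_el (1 - y) + inv_el (1 + y)) = inv_el (1 - y * y)"
    by (simp add: u_def v_def)
qed

lemma norm_pow2_selfadjoint:
  fixes b :: "'a::cstar_algebra"
  assumes "self_adjoint b"
  shows "norm (b ^ (2^m)) = norm b ^ (2^m)"
proof (induction m)
  case (Suc m)
  have "b ^ (2 ^ Suc m) = cstar (b ^ (2^m)) * b ^ (2^m)"
    using assms by (simp add: cstar_power self_adjoint_def power_mult[symmetric] power2_eq_square power_add[symmetric] mult_2)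
  hence "norm (b ^ (2 ^ Suc m)) = (norm (b ^ (2^m)))^2" by (simp add: cstar_identity)
  thus ?case using Suc by (simp add: power_mult[symmetric] mult.commute)
qed simp

lemma bounded_linear_cscale_left: "bounded_linear (\<lambda>z. cscale z (b::'a::cstar_algebra))"
proof (rule bounded_linear_intro[of _ "norm b"])
  show "cscale (x + y) b = cscale x b + cscale y b" for x y by (rule cscale_add_left)
  show "cscale (r *\<^sub>R x) b = r *\<^sub>R cscale x b" for r x
    by (simp add: scaleR_conv_of_real cscale_cscale[symmetric] cscale_of_real)
  show "norm (cscale x b) \<le> norm x * norm b" for x by (simp add: norm_cscale)
qed

lemma sum_split_2: "(\<Sum>k<2*(n::nat). f k) = (\<Sum>j<n. f (2*j)) + (\<Sum>j<n. (f (2*j+1)::'a::comm_monoid_add))"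
  by (induction n) (simp_all add: algebra_simps)

lemma rickart:
  fixes b :: "'a::cstar_algebra"
  assumes sa: "self_adjoint b" and nb: "norm b = 1"
  shows "\<exists>\<zeta>. cmod \<zeta> \<le> 1 \<and> \<not> invertible_el (1 - cscale \<zeta> b)"
proof (rule ccontr)
  assume "\<not> ?thesis"
  hence H: "\<And>\<zeta>. cmod \<zeta> \<le> 1 \<Longrightarrow> invertible_el (1 - cscale \<zeta> b)" by blast
  define K where "K = cball (0::complex) 1"
  define R where "R = (\<lambda>\<zeta>. inv_el (1 - cscale \<zeta> b))"
  have cR: "continuous_on K R" unfolding R_def
  proof (rule continuous_on_inv_el)
    show "\<forall>z\<in>K. invertible_el (1 - cscale z b)" using H by (auto simp: K_def)
    show "continuous_on K (\<lambda>z. 1 - cscale z b)"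
      by (intro continuous_intros linear_continuous_on bounded_linear_cscale_left)
  qed
  have "uniformly_continuous_on K R"
    by (rule compact_uniformly_continuous[OF cR]) (simp add: K_def)
  then obtain d where d: "d > 0" "\<And>x y. x \<in> K \<Longrightarrow> y \<in> K \<Longrightarrow> dist y x < d \<Longrightarrow> dist (R y) (R x) < 1/4"
    unfolding uniformly_continuous_on_def by (metis zero_less_divide_1_iff zero_less_numeral)
  define \<omega> where "\<omega> = (\<lambda>m::nat. cis (2 * pi / 2^m))"
  have claim: "\<forall>\<zeta>. cmod \<zeta> \<le> 1 \<longrightarrow> invertible_el (1 - cscale (\<zeta>^(2^m)) (b^(2^m))) \<and>
      (1/2^m) *\<^sub>R (\<Sum>k<2^m. R (\<omega> m ^ k * \<zeta>)) = inv_el (1 - cscale (\<zeta>^(2^m)) (b^(2^m)))" for m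
  proof (induction m)
    case 0
    show ?case using H by (simp add: R_def)
  next
    case (Suc m)
    show ?case
    proof (intro allI impI)
      fix \<zeta> :: complex assume z1: "cmod \<zeta> \<le> 1"
      define \<eta> where "\<eta> = \<omega> (Suc m)"
      have \<eta>2: "\<eta>^2 = \<omega> m" unfolding \<eta>_def \<omega>_def
        by (simp only: power2_eq_square cis_mult) (rule arg_cong[where f=cis], simp add: field_simps)
      have \<eta>p: "\<eta>^(2^m) = -1"
      proof -
        have "\<eta>^(2^m) = cis (real (2^m) * (2 * pi / 2 ^ Suc m))" unfolding \<eta>_def \<omega>_def by (rule Complex.DeMoivre)
        also have "real (2^m) * (2 * pi / 2 ^ Suc m) = pi" by (simp add: field_simps)
        finally show ?thesis by simp
      qed
      have n\<eta>: "cmod \<eta> = 1" by (simp add: \<eta>_def \<omega>_def)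
      have z2: "cmod (\<eta> * \<zeta>) \<le> 1" using z1 by (simp add: norm_mult n\<eta>)
      define w where "w = \<zeta>^(2^m)"
      define c where "c = b^(2^m)"
      define y where "y = cscale w c"
      have IH1: "invertible_el (1 - y)" "(1/2^m) *\<^sub>R (\<Sum>k<2^m. R (\<omega> m ^ k * \<zeta>)) = inv_el (1 - y)"
        using Suc z1 by (auto simp: y_def w_def c_def)
      have e2: "(\<eta> * \<zeta>)^(2^m) = - w" by (simp add: power_mult_distrib \<eta>p w_def)
      have my: "1 - cscale (- w) c = 1 + y" by (simp add: cscale_minus_left y_def)
      have IH2: "invertible_el (1 + y)" "(1/2^m) *\<^sub>R (\<Sum>k<2^m. R (\<omega> m ^ k * (\<eta> * \<zeta>))) = inv_el (1 + y)"
      proof -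
        have "invertible_el (1 - cscale ((\<eta> * \<zeta>)^(2^m)) (b^(2^m))) \<and>
          (1/2^m) *\<^sub>R (\<Sum>k<2^m. R (\<omega> m ^ k * (\<eta> * \<zeta>))) = inv_el (1 - cscale ((\<eta> * \<zeta>)^(2^m)) (b^(2^m)))"
          using Suc z2 by blast
        thus "invertible_el (1 + y)" "(1/2^m) *\<^sub>R (\<Sum>k<2^m. R (\<omega> m ^ k * (\<eta> * \<zeta>))) = inv_el (1 + y)"
          unfolding e2 c_def[symmetric] my by auto
      qed
      have yy: "y * y = cscale (\<zeta>^(2^Suc m)) (b^(2^Suc m))"
      proof -
        have "y * y = cscale (w * w) (c * c)"
          by (simp add: y_def cscale_mult_left[symmetric] cscale_mult_right[symmetric] cscale_cscale mult.commute)
        also have "w * w = \<zeta>^(2^Suc m)" by (simp add: w_def power_add[symmetric] mult_2)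
        also have "c * c = b^(2^Suc m)" by (simp add: c_def power_add[symmetric] mult_2)
        finally show ?thesis .
      qed
      have sum: "(\<Sum>k<2^Suc m. R (\<eta> ^ k * \<zeta>)) = (\<Sum>k<2^m. R (\<omega> m ^ k * \<zeta>)) + (\<Sum>k<2^m. R (\<omega> m ^ k * (\<eta> * \<zeta>)))"
      proof -
        have "(\<Sum>k<2^Suc m. R (\<eta> ^ k * \<zeta>)) = (\<Sum>k<2*2^m. R (\<eta> ^ k * \<zeta>))" by simp
        also have "\<dots> = (\<Sum>j<2^m. R (\<eta> ^ (2*j) * \<zeta>)) + (\<Sum>j<2^m. R (\<eta> ^ (2*j+1) * \<zeta>))"
          by (rule sum_split_2)
        also have "\<dots> = (\<Sum>k<2^m. R (\<omega> m ^ k * \<zeta>)) + (\<Sum>k<2^m. R (\<omega> m ^ k * (\<eta> * \<zeta>)))"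
          by (simp add: power_mult \<eta>2[symmetric] mult.assoc mult.left_commute)
        finally show ?thesis .
      qed
      have tp: "invertible_el (1 - y * y)" "(1/2) *\<^sub>R (inv_el (1 - y) + inv_el (1 + y)) = inv_el (1 - y * y)"
        using two_point[OF IH1(1) IH2(1)] by auto
      have "(1/2^Suc m) *\<^sub>R (\<Sum>k<2^Suc m. R (\<omega> (Suc m) ^ k * \<zeta>))
          = (1/2) *\<^sub>R ((1/2^m) *\<^sub>R (\<Sum>k<2^m. R (\<omega> m ^ k * \<zeta>)) + (1/2^m) *\<^sub>R (\<Sum>k<2^m. R (\<omega> m ^ k * (\<eta> * \<zeta>))))"
        unfolding \<eta>_def[symmetric] sum by (simp add: scaleR_add_right)
      also have "\<dots> = inv_el (1 - y * y)" unfolding IH1(2) IH2(2) tp(2) ..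
      finally show "invertible_el (1 - cscale (\<zeta>^(2^Suc m)) (b^(2^Suc m))) \<and>
          (1/2^Suc m) *\<^sub>R (\<Sum>k<2^Suc m. R (\<omega> (Suc m) ^ k * \<zeta>)) = inv_el (1 - cscale (\<zeta>^(2^Suc m)) (b^(2^Suc m)))"
        using tp(1) yy by simp
    qed
  qed
  define s where "s = 1 - min d 1 / 2"
  have s0: "0 < s" "s < 1" using d by (auto simp: s_def)
  obtain N where N: "s ^ N < 1/8" using real_arch_pow_inv[of "1/8" s] s0 by auto
  define m where "m = N"
  have "N \<le> 2^N" using less_exp[of N] by simp
  hence sm: "s ^ (2^m) \<le> 1/8" using N s0 unfolding m_def
    by (meson less_imp_le order_trans power_decreasing)
  define c where "c = b ^ (2^m)"
  have nc: "norm c = 1" using norm_pow2_selfadjoint[OF sa, of m] nb by (simp add: c_def)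
  define A1 where "A1 = (1/2^m) *\<^sub>R (\<Sum>k<2^m. R (\<omega> m ^ k * 1))"
  define As where "As = (1/2^m) *\<^sub>R (\<Sum>k<2^m. R (\<omega> m ^ k * of_real s))"
  have A1eq: "A1 = inv_el (1 - c)" and ic: "invertible_el (1 - c)"
    using claim[of m, rule_format, of 1] by (auto simp: A1_def c_def)
  have Aseq: "As = inv_el (1 - cscale (of_real (s^(2^m))) c)"
    using claim[of m, rule_format, of "of_real s"] s0 by (auto simp: As_def c_def)
  have "norm (A1 - As) \<le> 1/4"
  proof -
    have "A1 - As = (1/2^m) *\<^sub>R (\<Sum>k<2^m. R (\<omega> m ^ k * 1) - R (\<omega> m ^ k * of_real s))"
      by (simp add: A1_def As_def sum_subtractf scaleR_diff_right)
    also have "norm \<dots> \<le> (1/2^m) * (\<Sum>k<(2::nat)^m. 1/4)"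
    proof -
      have "norm (\<Sum>k<2^m. R (\<omega> m ^ k * 1) - R (\<omega> m ^ k * of_real s)) \<le> (\<Sum>k<(2::nat)^m. 1/4)"
      proof (rule sum_norm_le)
        fix k assume "k \<in> {..<(2::nat)^m}"
        have w1: "cmod (\<omega> m ^ k) = 1" by (simp add: \<omega>_def norm_power)
        have e: "\<omega> m ^ k * 1 - \<omega> m ^ k * of_real s = \<omega> m ^ k * of_real (1 - s)"
          by (simp add: algebra_simps)
        have "dist (\<omega> m ^ k * 1) (\<omega> m ^ k * of_real s) = 1 - s"
          using s0 unfolding dist_norm e norm_mult w1 norm_of_real by simp
        also have "\<dots> < d" using d by (simp add: s_def)
        finally have "dist (R (\<omega> m ^ k * 1)) (R (\<omega> m ^ k * of_real s)) < 1/4"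
          using s0 by (intro d(2)) (auto simp: K_def w1 norm_mult)
        thus "norm (R (\<omega> m ^ k * 1) - R (\<omega> m ^ k * of_real s)) \<le> 1/4" by (simp add: dist_norm)
      qed
      thus ?thesis by simp
    qed
    also have "\<dots> = 1/4" by simp
    finally show ?thesis .
  qed
  moreover have "norm (As - 1) \<le> 1/7"
  proof -
    have ny: "norm (cscale (of_real (s^(2^m))) c) = s^(2^m)" using s0 nc by (simp add: norm_cscale norm_power)
    hence "norm (cscale (of_real (s^(2^m))) c) < 1" using sm by simp
    from neumann(3)[OF this] have "norm (As - 1) \<le> s^(2^m) / (1 - s^(2^m))" using Aseq ny by simp
    also have "\<dots> \<le> (1/8) / (1 - 1/8)" using sm s0
      by (intro frac_le) auto
    finally show ?thesis by simp
  qed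
  ultimately have "norm (A1 - 1) < 1/2"
    using norm_triangle_ineq[of "A1 - As" "As - 1"] by simp
  hence n1: "norm (1 - A1) < 1" by (simp add: norm_minus_commute)
  have "invertible_el (1 - (1 - A1))" using neumann(1)[OF n1] .
  have "inv_el A1 = 1 - c" using inv_el[OF ic] A1eq by (intro inv_el_unique) auto
  hence "norm ((1 - c) - 1) \<le> norm (1 - A1) / (1 - norm (1 - A1))"
    using neumann(3)[OF n1] by simp
  also have "\<dots> < 1"
  proof -
    have "norm (1 - A1) < 1/2" using \<open>norm (A1 - 1) < 1/2\<close> by (simp add: norm_minus_commute)
    thus ?thesis by (simp add: field_simps)
  qed
  finally show False using nc by simp
qed

lemma invertible_cscale_cancel:
  fixes y :: "'a::cstar_algebra"
  assumes "c \<noteq> 0" "invertible_el (cscale c y)"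
  shows "invertible_el y"
proof -
  have "cscale (1/c) 1 * cscale c y = y" using assms(1) by (simp add: cscale1_mult cscale_cscale)
  thus ?thesis using invertible_mult[OF invertible_cscale1[of "1/c"] assms(2)] assms(1) by simp
qed

lemma spectral_norm:
  fixes x :: "'a::cstar_algebra"
  assumes sa: "self_adjoint x"
  shows "\<exists>t. complex_of_real t \<in> cspectrum x \<and> norm x \<le> \<bar>t\<bar>"
proof (cases "x = 0")
  case True
  thus ?thesis by (intro exI[of _ 0]) (simp add: cspectrum_iff not_invertible_zero)
next
  case False
  define r where "r = norm x"
  have r0: "r > 0" using False by (simp add: r_def)
  define b where "b = (1/r) *\<^sub>R x"
  have sab: "self_adjoint b" using sa by (simp add: b_def self_adjoint_def cstar_scaleR)
  have nb: "norm b = 1" using r0 by (simp add: b_def r_def)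
  obtain \<zeta> where z: "cmod \<zeta> \<le> 1" "\<not> invertible_el (1 - cscale \<zeta> b)" using rickart[OF sab nb] by blast
  have z0: "\<zeta> \<noteq> 0" using z by auto
  define l where "l = 1 / \<zeta>"
  have "1 - cscale \<zeta> b = cscale (- \<zeta>) (b - cscale l 1)"
    using z0 by (simp add: l_def cscale_diff_right cscale_cscale cscale_minus_left)
  hence nl: "\<not> invertible_el (b - cscale l 1)"
    using z(2) z0 by (metis cscale1_mult invertible_cscale1 invertible_mult neg_equal_0_iff_equal)
  hence "l \<in> cspectrum b" by (simp add: cspectrum_iff)
  hence iml: "Im l = 0" by (rule selfadjoint_cspectrum_real[OF sab])
  have "x - cscale (of_real r * l) 1 = cscale (of_real r) (b - cscale l 1)"
    using r0 by (simp add: b_def cscale_diff_right cscale_cscale scaleR_cscale)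
  hence "\<not> invertible_el (x - cscale (of_real r * l) 1)"
    using nl invertible_cscale_cancel[of "of_real r" "b - cscale l 1"] r0 by auto
  moreover have "of_real r * l = complex_of_real (r * Re l)" using iml by (simp add: complex_eq_iff)
  ultimately have "complex_of_real (r * Re l) \<in> cspectrum x" by (simp add: cspectrum_iff)
  moreover have "norm x \<le> \<bar>r * Re l\<bar>"
  proof -
    have "cmod l \<ge> 1" using z z0 by (simp add: l_def norm_divide)
    hence "\<bar>Re l\<bar> \<ge> 1" using iml by (simp add: cmod_def)
    hence "r * 1 \<le> r * \<bar>Re l\<bar>" using r0 by (intro mult_left_mono) auto
    thus ?thesis using r0 by (simp add: r_def abs_mult)
  qed
  ultimately show ?thesis by blast
qed

section \<open>Polynomial evaluation\<close>

definition ceval :: "complex poly \<Rightarrow> 'a::cstar_algebra \<Rightarrow> 'a" where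
  "ceval q x = (\<Sum>i\<le>degree q. cscale (coeff q i) (x ^ i))"

lemma ceval_upto:
  assumes "degree q \<le> N"
  shows "ceval q x = (\<Sum>i\<le>N. cscale (coeff q i) (x ^ i))"
  unfolding ceval_def
  by (rule sum.mono_neutral_left) (use assms in \<open>auto simp: coeff_eq_0\<close>)

lemma ceval_pCons: "ceval (pCons a q) x = cscale a 1 + x * ceval q x"
proof -
  have "ceval (pCons a q) x = (\<Sum>i\<le>Suc (degree q). cscale (coeff (pCons a q) i) (x ^ i))"
    by (rule ceval_upto) (simp add: degree_pCons_le)
  also have "\<dots> = cscale a 1 + (\<Sum>i\<le>degree q. cscale (coeff q i) (x * x ^ i))"
    by (subst sum.atMost_Suc_shift) simp
  also have "\<dots> = cscale a 1 + x * ceval q x"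
    by (simp add: ceval_def sum_distrib_left cscale_mult_right)
  finally show ?thesis .
qed

lemma ceval_0 [simp]: "ceval 0 x = 0" by (simp add: ceval_def)

lemma ceval_const: "ceval [:c:] x = cscale c 1"
  using ceval_pCons[of c 0 x] by simp

lemma ceval_add: "ceval (p + q) x = ceval p x + ceval q x"
proof -
  define N where "N = max (degree p) (degree q)"
  have "ceval (p + q) x = (\<Sum>i\<le>N. cscale (coeff (p + q) i) (x ^ i))"
    by (rule ceval_upto) (simp add: N_def degree_add_le)
  also have "\<dots> = (\<Sum>i\<le>N. cscale (coeff p i) (x ^ i)) + (\<Sum>i\<le>N. cscale (coeff q i) (x ^ i))"
    by (simp add: cscale_add_left sum.distrib)
  also have "\<dots> = ceval p x + ceval q x"
    by (simp add: ceval_upto[symmetric] N_def)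
  finally show ?thesis .
qed

lemma ceval_smult: "ceval (smult c p) x = cscale c (ceval p x)"
  by (simp add: ceval_upto[OF degree_smult_le] ceval_def cscale_sum_right cscale_cscale)

lemma ceval_mult: "ceval (p * q) x = ceval p x * ceval q x"
proof (induction p)
  case 0
  then show ?case by simp
next
  case (pCons a p)
  have "ceval (pCons a p * q) x = cscale a (ceval q x) + x * (ceval p x * ceval q x)"
    by (simp add: ceval_add ceval_smult ceval_pCons pCons.IH)
  also have "\<dots> = ceval (pCons a p) x * ceval q x"
    by (simp add: ceval_pCons distrib_right cscale1_mult mult.assoc)
  finally show ?case .
qed

lemma ceval_linear: "ceval [:- m, 1:] x = x - cscale m 1"
  by (simp add: ceval_pCons cscale_minus_left)

lemma ceval_invertible:
  fixes x :: "'a::cstar_algebra"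
  assumes "q \<noteq> 0" "\<And>m. poly q m = 0 \<Longrightarrow> m \<notin> cspectrum x"
  shows "invertible_el (ceval q x)"
  using assms
proof (induction "degree q" arbitrary: q rule: less_induct)
  case less
  show ?case
  proof (cases "degree q = 0")
    case True
    then obtain c where q: "q = [:c:]" by (metis degree_eq_zeroE)
    thus ?thesis using less.prems by (simp add: ceval_const invertible_cscale1)
  next
    case False
    hence "\<not> constant (poly q)" by (simp add: constant_degree)
    then obtain m where m: "poly q m = 0" using fundamental_theorem_of_algebra by blast
    then obtain r where r: "q = [:-m, 1:] * r" by (metis poly_eq_0_iff_dvd dvdE)
    have r0: "r \<noteq> 0" using less.prems r by auto
    have "degree q = degree [:-m, 1:] + degree r" unfolding r by (rule degree_mult_eq) (simp_all add: r0)
    hence "degree q = 1 + degree r" by simp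
    hence dr: "degree r < degree q" by simp
    have ir: "invertible_el (ceval r x)"
    proof (rule less.hyps[OF dr r0])
      fix m' assume "poly r m' = 0"
      hence "poly q m' = 0" by (simp add: r)
      thus "m' \<notin> cspectrum x" using less.prems by blast
    qed
    have im: "invertible_el (x - cscale m 1)" using less.prems(2)[OF m] by (simp add: cspectrum_iff)
    have "invertible_el (ceval [:-m, 1:] x * ceval r x)"
      unfolding ceval_linear by (rule invertible_mult[OF im ir])
    thus ?thesis unfolding r ceval_mult .
  qed
qed

lemma alg_poly_upto:
  assumes "degree p \<le> N"
  shows "alg_poly p x = (\<Sum>i\<le>N. coeff p i *\<^sub>R x ^ i)"
  unfolding alg_poly_def
  by (rule sum.mono_neutral_left) (use assms in \<open>auto simp: coeff_eq_0\<close>)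

lemma alg_poly_pCons: "alg_poly (pCons a q) x = a *\<^sub>R 1 + x * alg_poly q x"
proof -
  have "alg_poly (pCons a q) x = (\<Sum>i\<le>Suc (degree q). coeff (pCons a q) i *\<^sub>R x ^ i)"
    by (rule alg_poly_upto) (simp add: degree_pCons_le)
  also have "\<dots> = a *\<^sub>R 1 + (\<Sum>i\<le>degree q. coeff q i *\<^sub>R (x * x ^ i))"
    by (subst sum.atMost_Suc_shift) simp
  also have "\<dots> = a *\<^sub>R 1 + x * alg_poly q x"
    by (simp add: alg_poly_def sum_distrib_left mult_scaleR_right)
  finally show ?thesis .
qed

lemma alg_poly_0 [simp]: "alg_poly 0 x = 0" by (simp add: alg_poly_def)

lemma alg_poly_const: "alg_poly [:c:] x = c *\<^sub>R 1"
  using alg_poly_pCons[of c 0 x] by simp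

lemma alg_poly_add: "alg_poly (p + q) x = alg_poly p x + alg_poly q x"
proof -
  define N where "N = max (degree p) (degree q)"
  have "alg_poly (p + q) x = (\<Sum>i\<le>N. coeff (p + q) i *\<^sub>R x ^ i)"
    by (rule alg_poly_upto) (simp add: N_def degree_add_le)
  also have "\<dots> = (\<Sum>i\<le>N. coeff p i *\<^sub>R x ^ i) + (\<Sum>i\<le>N. coeff q i *\<^sub>R x ^ i)"
    by (simp add: scaleR_add_left sum.distrib)
  also have "\<dots> = alg_poly p x + alg_poly q x"
    by (simp add: alg_poly_upto[symmetric] N_def)
  finally show ?thesis .
qed

lemma alg_poly_smult: "alg_poly (smult c p) x = c *\<^sub>R (alg_poly p x)"
  by (simp add: alg_poly_upto[OF degree_smult_le] alg_poly_def scaleR_sum_right)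

lemma alg_poly_minus: "alg_poly (- p) x = - alg_poly p x"
  using alg_poly_smult[of "-1" p x] by simp

lemma alg_poly_diff: "alg_poly (p - q) x = alg_poly p x - alg_poly q x"
  using alg_poly_add[of p "-q" x] by (simp add: alg_poly_minus)

lemma alg_poly_mult: "alg_poly (p * q) x = alg_poly p x * alg_poly q x"
proof (induction p)
  case 0
  then show ?case by simp
next
  case (pCons a p)
  have "alg_poly (pCons a p * q) x = a *\<^sub>R (alg_poly q x) + x * (alg_poly p x * alg_poly q x)"
    by (simp add: alg_poly_add alg_poly_smult alg_poly_pCons pCons.IH)
  also have "\<dots> = alg_poly (pCons a p) x * alg_poly q x"
    by (simp add: alg_poly_pCons distrib_right mult.assoc)
  finally show ?case .
qed

lemma alg_poly_pcompose: "alg_poly (pcompose p q) x = alg_poly p (alg_poly q x)"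
proof (induction p)
  case 0
  then show ?case by simp
next
  case (pCons a p)
  show ?case by (simp add: pcompose_pCons alg_poly_add alg_poly_mult alg_poly_const alg_poly_pCons pCons.IH)
qed

lemma alg_poly_ceval: "alg_poly p x = ceval (map_poly complex_of_real p) x"
  by (simp add: alg_poly_def ceval_def degree_map_poly coeff_map_poly cscale_of_real)

lemma alg_poly_selfadjoint:
  assumes "self_adjoint (x::'a::cstar_algebra)"
  shows "self_adjoint (alg_poly p x)"
  using assms by (simp add: self_adjoint_def alg_poly_def cstar_sum cstar_scaleR cstar_power)


definition Sp :: "'a::cstar_algebra \<Rightarrow> real set" where
  "Sp x = {t. complex_of_real t \<in> cspectrum x}"

lemma Sp_bound: "t \<in> Sp x \<Longrightarrow> \<bar>t\<bar> \<le> norm x"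
  using cspectrum_bound[of "complex_of_real t" x] by (simp add: Sp_def)

lemma Sp_sub: "Sp x \<subseteq> {- norm x..norm x}"
  using Sp_bound by (fastforce simp: abs_le_iff)

lemma poly_map_of_real: "poly (map_poly complex_of_real p) (complex_of_real s) = complex_of_real (poly p s)"
  by (induction p) (simp_all add: map_poly_pCons)

lemma ceval_minus: "ceval (- p) x = - ceval p x"
  using ceval_smult[of "-1" p x] by (simp add: cscale_minus_left)

lemma ceval_diff: "ceval (p - q) x = ceval p x - ceval q x"
  using ceval_add[of p "-q" x] by (simp add: ceval_minus)

lemma poly_norm_bound:
  fixes x :: "'a::cstar_algebra"
  assumes sa: "self_adjoint x" and M: "\<And>t. t \<in> Sp x \<Longrightarrow> \<bar>poly p t\<bar> \<le> M"
  shows "norm (alg_poly p x) \<le> M"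
proof -
  define h where "h = alg_poly p x"
  have sah: "self_adjoint h" using alg_poly_selfadjoint[OF sa] h_def by simp
  obtain t0 where t0: "complex_of_real t0 \<in> cspectrum h" "norm h \<le> \<bar>t0\<bar>"
    using spectral_norm[OF sah] by blast
  have "\<exists>s. s \<in> Sp x \<and> poly p s = t0"
  proof (rule ccontr)
    assume nex: "\<not> ?thesis"
    define q where "q = map_poly complex_of_real p - [:complex_of_real t0:]"
    have cq: "ceval q x = h - cscale (complex_of_real t0) 1"
      by (simp add: q_def ceval_diff ceval_const h_def alg_poly_ceval)
    obtain s0 where s0: "complex_of_real s0 \<in> cspectrum x" using spectral_norm[OF sa] by blast
    have q0: "q \<noteq> 0"
    proof
      assume "q = 0"
      hence "poly q (complex_of_real s0) = 0" by simp
      hence "poly p s0 = t0" by (simp add: q_def poly_map_of_real)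
      thus False using nex s0 by (auto simp: Sp_def)
    qed
    have "invertible_el (ceval q x)"
    proof (rule ceval_invertible[OF q0])
      fix m assume m: "poly q m = 0"
      show "m \<notin> cspectrum x"
      proof
        assume ms: "m \<in> cspectrum x"
        hence "Im m = 0" by (rule selfadjoint_cspectrum_real[OF sa])
        hence mr: "m = complex_of_real (Re m)" by (simp add: complex_eq_iff)
        hence "poly q (complex_of_real (Re m)) = 0" using m by simp
        hence "poly p (Re m) = t0" by (simp add: q_def poly_map_of_real)
        moreover have "Re m \<in> Sp x" using ms mr by (simp add: Sp_def)
        ultimately show False using nex by blast
      qed
    qed
    thus False using t0(1) cq by (simp add: cspectrum_iff)
  qed
  then obtain s where "s \<in> Sp x" "poly p s = t0" by blast
  hence "\<bar>t0\<bar> \<le> M" using M by blast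
  thus ?thesis using t0(2) h_def by simp
qed

lemma poly_approx:
  fixes g :: "real \<Rightarrow> real"
  assumes "continuous_on UNIV g"
  shows "\<exists>P. uniform_limit {a..b} (\<lambda>k t. poly (P k) t) g sequentially"
proof -
  have "\<forall>k::nat. \<exists>p. \<forall>t\<in>{a..b}. \<bar>g t - poly p t\<bar> < 1 / (real k + 1)"
  proof
    fix k :: nat
    obtain f where f: "real_polynomial_function f" "\<And>t. t \<in> {a..b} \<Longrightarrow> \<bar>g t - f t\<bar> < 1 / (real k + 1)"
      using Stone_Weierstrass_real_polynomial_function[of "{a..b}" g "1 / (real k + 1)"]
        continuous_on_subset[OF assms] by auto
    obtain c n where fc: "f = (\<lambda>x. \<Sum>i\<le>n. c i * x^i)" using f(1) real_polynomial_function_iff_sum by blast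
    have "poly (\<Sum>i\<le>n. monom (c i) i) t = f t" for t by (simp add: fc poly_sum poly_monom)
    thus "\<exists>p. \<forall>t\<in>{a..b}. \<bar>g t - poly p t\<bar> < 1 / (real k + 1)" using f(2) by metis
  qed
  then obtain P where P: "\<And>k t. t \<in> {a..b} \<Longrightarrow> \<bar>g t - poly (P k) t\<bar> < 1 / (real k + 1)"
    by metis
  have "uniform_limit {a..b} (\<lambda>k t. poly (P k) t) g sequentially"
  proof (rule uniform_limitI)
    fix e :: real assume e: "e > 0"
    obtain N :: nat where N: "1 / (real N + 1) < e"
      using e by (metis nat_approx_posE of_nat_Suc add.commute)
    show "\<forall>\<^sub>F k in sequentially. \<forall>t\<in>{a..b}. dist (poly (P k) t) (g t) < e"
    proof (rule eventually_sequentiallyI[of N])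
      fix k assume k: "N \<le> k"
      have "1 / (real k + 1) \<le> 1 / (real N + 1)" using k by (intro divide_left_mono) auto
      moreover have "\<bar>g t - poly (P k) t\<bar> < 1 / (real k + 1)" if "t \<in> {a..b}" for t
        using P that by blast
      ultimately show "\<forall>t\<in>{a..b}. dist (poly (P k) t) (g t) < e"
        using N by (smt (verit) dist_real_def)
    qed
  qed
  thus ?thesis by blast
qed

lemma alg_poly_diff_small:
  fixes x :: "'a::cstar_algebra"
  assumes sa: "self_adjoint x"
    and p: "uniform_limit (Sp x) (\<lambda>k t. poly (p k) t) g sequentially"
    and q: "uniform_limit (Sp x) (\<lambda>k t. poly (q k) t) g sequentially"
  shows "(\<lambda>k. alg_poly (p k) x - alg_poly (q k) x) \<longlonglongrightarrow> 0"
proof (rule tendstoI)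
  fix e :: real assume e: "e > 0"
  have ep: "\<forall>\<^sub>F k in sequentially. \<forall>t\<in>Sp x. dist (poly (p k) t) (g t) < e/4"
    by (rule uniform_limitD[OF p]) (use e in simp)
  have eq: "\<forall>\<^sub>F k in sequentially. \<forall>t\<in>Sp x. dist (poly (q k) t) (g t) < e/4"
    by (rule uniform_limitD[OF q]) (use e in simp)
  show "\<forall>\<^sub>F k in sequentially. dist (alg_poly (p k) x - alg_poly (q k) x) 0 < e"
    using ep eq
  proof eventually_elim
    case (elim k)
    have "norm (alg_poly (p k - q k) x) \<le> e/2"
    proof (rule poly_norm_bound[OF sa])
      fix t assume "t \<in> Sp x"
      hence "dist (poly (p k) t) (g t) < e/4" "dist (poly (q k) t) (g t) < e/4" using elim by auto
      thus "\<bar>poly (p k - q k) t\<bar> \<le> e/2" by (simp add: dist_real_def) (smt (verit))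
    qed
    thus ?case using e by (simp add: alg_poly_diff)
  qed
qed

lemma cfc_lim:
  fixes x :: "'a::cstar_algebra"
  assumes sa: "self_adjoint x" and cg: "continuous_on UNIV g"
    and p: "uniform_limit (Sp x) (\<lambda>k t. poly (p k) t) g sequentially"
  shows "(\<lambda>k. alg_poly (p k) x) \<longlonglongrightarrow> cfc g x"
proof -
  obtain P where P0: "uniform_limit {- norm x..norm x} (\<lambda>k t. poly (P k) t) g sequentially"
    using poly_approx[OF cg] by blast
  have P: "uniform_limit (Sp x) (\<lambda>k t. poly (P k) t) g sequentially"
    by (rule uniform_limit_on_subset[OF P0 Sp_sub])
  have "Cauchy (\<lambda>k. alg_poly (P k) x)"
  proof (rule CauchyI)
    fix e :: real assume e: "e > 0"
    have "\<forall>\<^sub>F k in sequentially. \<forall>t\<in>Sp x. dist (poly (P k) t) (g t) < e/4"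
      by (rule uniform_limitD[OF P]) (use e in simp)
    then obtain N where N: "\<And>k t. k \<ge> N \<Longrightarrow> t \<in> Sp x \<Longrightarrow> dist (poly (P k) t) (g t) < e/4"
      unfolding eventually_sequentially by blast
    show "\<exists>M. \<forall>m\<ge>M. \<forall>n\<ge>M. norm (alg_poly (P m) x - alg_poly (P n) x) < e"
    proof (intro exI allI impI)
      fix m n assume mn: "N \<le> m" "N \<le> n"
      have "norm (alg_poly (P m - P n) x) \<le> e/2"
      proof (rule poly_norm_bound[OF sa])
        fix t assume "t \<in> Sp x"
        hence "dist (poly (P m) t) (g t) < e/4" "dist (poly (P n) t) (g t) < e/4" using N mn by auto
        thus "\<bar>poly (P m - P n) t\<bar> \<le> e/2" by (simp add: dist_real_def) (smt (verit))
      qed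
      thus "norm (alg_poly (P m) x - alg_poly (P n) x) < e" using e by (simp add: alg_poly_diff)
    qed
  qed
  then obtain y0 where y0: "(\<lambda>k. alg_poly (P k) x) \<longlonglongrightarrow> y0"
    using Cauchy_convergent_iff convergent_def by blast
  have all: "(\<lambda>k. alg_poly (p k) x) \<longlonglongrightarrow> y0"
    if pp: "uniform_limit (Sp x) (\<lambda>k t. poly (p k) t) g sequentially" for p
  proof -
    have "(\<lambda>k. (alg_poly (p k) x - alg_poly (P k) x) + alg_poly (P k) x) \<longlonglongrightarrow> 0 + y0"
      by (intro tendsto_add alg_poly_diff_small[OF sa pp P] y0)
    thus ?thesis by simp
  qed
  have "cfc g x = y0"
    unfolding cfc_def
  proof (rule the_equality)
    show "\<forall>p. uniform_limit {t. complex_of_real t \<in> cspectrum x} (\<lambda>k. poly (p k)) g sequentially \<longrightarrow>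
        (\<lambda>k. alg_poly (p k) x) \<longlonglongrightarrow> y0"
      using all by (simp add: Sp_def)
  next
    fix y assume "\<forall>p. uniform_limit {t. complex_of_real t \<in> cspectrum x} (\<lambda>k. poly (p k)) g sequentially \<longrightarrow>
        (\<lambda>k. alg_poly (p k) x) \<longlonglongrightarrow> y"
    hence "(\<lambda>k. alg_poly (P k) x) \<longlonglongrightarrow> y" using P by (simp add: Sp_def)
    thus "y = y0" using y0 LIMSEQ_unique by blast
  qed
  thus ?thesis using all[OF p] by simp
qed

lemma cfc_seq:
  fixes x :: "'a::cstar_algebra"
  assumes sa: "self_adjoint x" and cg: "continuous_on UNIV g"
  obtains P where "uniform_limit {- norm x..norm x} (\<lambda>k t. poly (P k) t) g sequentially"
    "uniform_limit (Sp x) (\<lambda>k t. poly (P k) t) g sequentially"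
    "(\<lambda>k. alg_poly (P k) x) \<longlonglongrightarrow> cfc g x"
proof -
  obtain P where P0: "uniform_limit {- norm x..norm x} (\<lambda>k t. poly (P k) t) g sequentially"
    using poly_approx[OF cg] by blast
  have P: "uniform_limit (Sp x) (\<lambda>k t. poly (P k) t) g sequentially"
    by (rule uniform_limit_on_subset[OF P0 Sp_sub])
  show ?thesis using that[OF P0 P cfc_lim[OF sa cg P]] .
qed

lemma cfc_add:
  fixes x :: "'a::cstar_algebra"
  assumes sa: "self_adjoint x" and cg: "continuous_on UNIV g" and ch: "continuous_on UNIV h"
  shows "cfc (\<lambda>t. g t + h t) x = cfc g x + cfc h x"
proof -
  obtain P where P: "uniform_limit (Sp x) (\<lambda>k t. poly (P k) t) g sequentially"
    "(\<lambda>k. alg_poly (P k) x) \<longlonglongrightarrow> cfc g x" using cfc_seq[OF sa cg] by metis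
  obtain Q where Q: "uniform_limit (Sp x) (\<lambda>k t. poly (Q k) t) h sequentially"
    "(\<lambda>k. alg_poly (Q k) x) \<longlonglongrightarrow> cfc h x" using cfc_seq[OF sa ch] by metis
  have u: "uniform_limit (Sp x) (\<lambda>k t. poly (P k + Q k) t) (\<lambda>t. g t + h t) sequentially"
    using uniform_limit_add[OF P(1) Q(1)] by simp
  have c: "continuous_on UNIV (\<lambda>t. g t + h t)" by (intro continuous_intros cg ch)
  have "(\<lambda>k. alg_poly (P k + Q k) x) \<longlonglongrightarrow> cfc (\<lambda>t. g t + h t) x" by (rule cfc_lim[OF sa c u])
  moreover have "(\<lambda>k. alg_poly (P k + Q k) x) \<longlonglongrightarrow> cfc g x + cfc h x"
    unfolding alg_poly_add by (intro tendsto_add P Q)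
  ultimately show ?thesis using LIMSEQ_unique by blast
qed

lemma cfc_mult:
  fixes x :: "'a::cstar_algebra"
  assumes sa: "self_adjoint x" and cg: "continuous_on UNIV g" and ch: "continuous_on UNIV h"
  shows "cfc (\<lambda>t. g t * h t) x = cfc g x * cfc h x"
proof -
  obtain P where P: "uniform_limit {- norm x..norm x} (\<lambda>k t. poly (P k) t) g sequentially"
    "(\<lambda>k. alg_poly (P k) x) \<longlonglongrightarrow> cfc g x" using cfc_seq[OF sa cg] by metis
  obtain Q where Q: "uniform_limit {- norm x..norm x} (\<lambda>k t. poly (Q k) t) h sequentially"
    "(\<lambda>k. alg_poly (Q k) x) \<longlonglongrightarrow> cfc h x" using cfc_seq[OF sa ch] by metis
  have bg: "bounded (g ` {- norm x..norm x})"
    by (intro compact_imp_bounded compact_continuous_image continuous_on_subset[OF cg]) auto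
  have bh: "bounded (h ` {- norm x..norm x})"
    by (intro compact_imp_bounded compact_continuous_image continuous_on_subset[OF ch]) auto
  have u0: "uniform_limit {- norm x..norm x} (\<lambda>k t. poly (P k * Q k) t) (\<lambda>t. g t * h t) sequentially"
    using uniform_lim_mult[OF P(1) Q(1) bg bh] by simp
  have u: "uniform_limit (Sp x) (\<lambda>k t. poly (P k * Q k) t) (\<lambda>t. g t * h t) sequentially"
    by (rule uniform_limit_on_subset[OF u0 Sp_sub])
  have c: "continuous_on UNIV (\<lambda>t. g t * h t)" by (intro continuous_intros cg ch)
  have "(\<lambda>k. alg_poly (P k * Q k) x) \<longlonglongrightarrow> cfc (\<lambda>t. g t * h t) x" by (rule cfc_lim[OF sa c u])
  moreover have "(\<lambda>k. alg_poly (P k * Q k) x) \<longlonglongrightarrow> cfc g x * cfc h x"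
    unfolding alg_poly_mult by (intro tendsto_mult P Q)
  ultimately show ?thesis using LIMSEQ_unique by blast
qed

lemma cfc_const:
  fixes x :: "'a::cstar_algebra"
  assumes sa: "self_adjoint x"
  shows "cfc (\<lambda>t. c) x = c *\<^sub>R 1"
proof -
  have u: "uniform_limit (Sp x) (\<lambda>k t. poly [:c:] t) (\<lambda>t. c) sequentially"
    by (simp add: uniform_limit_const)
  have "(\<lambda>k. alg_poly [:c:] x) \<longlonglongrightarrow> cfc (\<lambda>t. c) x"
    by (rule cfc_lim[OF sa _ u]) simp
  thus ?thesis by (simp add: alg_poly_const LIMSEQ_const_iff)
qed

lemma cfc_selfadjoint:
  fixes x :: "'a::cstar_algebra"
  assumes sa: "self_adjoint x" and cg: "continuous_on UNIV g"
  shows "self_adjoint (cfc g x)"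
proof -
  obtain P where P: "(\<lambda>k. alg_poly (P k) x) \<longlonglongrightarrow> cfc g x" using cfc_seq[OF sa cg] by metis
  have "(\<lambda>k. cstar (alg_poly (P k) x)) \<longlonglongrightarrow> cstar (cfc g x)" by (rule tendsto_cstar[OF P])
  moreover have "cstar (alg_poly (P k) x) = alg_poly (P k) x" for k
    using alg_poly_selfadjoint[OF sa] by (simp add: self_adjoint_def)
  ultimately have "(\<lambda>k. alg_poly (P k) x) \<longlonglongrightarrow> cstar (cfc g x)" by simp
  thus ?thesis using P LIMSEQ_unique unfolding self_adjoint_def by blast
qed

lemma cfc_shift:
  fixes x :: "'a::cstar_algebra"
  assumes sa: "self_adjoint x" and cg: "continuous_on UNIV g"
  shows "cfc g (x + c *\<^sub>R 1) = cfc (\<lambda>t. g (t + c)) x"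
proof -
  define x' where "x' = x + c *\<^sub>R 1"
  have sa': "self_adjoint x'" using sa by (simp add: x'_def self_adjoint_def cstar_add cstar_scaleR)
  have cg': "continuous_on UNIV (\<lambda>t. g (t + c))"
    by (rule continuous_on_compose2[OF cg]) (auto intro: continuous_intros)
  obtain P where P: "uniform_limit (Sp x) (\<lambda>k t. poly (P k) t) (\<lambda>t. g (t + c)) sequentially"
    "(\<lambda>k. alg_poly (P k) x) \<longlonglongrightarrow> cfc (\<lambda>t. g (t + c)) x" using cfc_seq[OF sa cg'] by metis
  define Q where "Q = (\<lambda>k. pcompose (P k) [:-c, 1:])"
  have pq: "poly (Q k) t = poly (P k) (t - c)" for k t by (simp add: Q_def poly_pcompose)
  have Sp': "t - c \<in> Sp x" if "t \<in> Sp x'" for t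
  proof -
    have "x' - cscale (complex_of_real t) 1 = x - cscale (complex_of_real (t - c)) 1"
      by (simp add: x'_def scaleR_cscale cscale_diff_left)
    thus ?thesis using that by (simp add: Sp_def cspectrum_iff)
  qed
  have u: "uniform_limit (Sp x') (\<lambda>k t. poly (Q k) t) g sequentially"
  proof (rule uniform_limitI)
    fix e :: real assume e: "e > 0"
    show "\<forall>\<^sub>F k in sequentially. \<forall>t\<in>Sp x'. dist (poly (Q k) t) (g t) < e"
      using uniform_limitD[OF P(1) e]
    proof eventually_elim
      case (elim k)
      show ?case
      proof
        fix t assume "t \<in> Sp x'"
        hence "dist (poly (P k) (t - c)) (g (t - c + c)) < e" using elim Sp' by blast
        thus "dist (poly (Q k) t) (g t) < e" by (simp add: pq)
      qed
    qed
  qed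
  have "alg_poly [:-c, 1:] x' = x"
    by (simp add: alg_poly_pCons alg_poly_const x'_def)
  hence eqQ: "alg_poly (Q k) x' = alg_poly (P k) x" for k by (simp add: Q_def alg_poly_pcompose)
  have "(\<lambda>k. alg_poly (Q k) x') \<longlonglongrightarrow> cfc g x'" by (rule cfc_lim[OF sa' cg u])
  hence "(\<lambda>k. alg_poly (P k) x) \<longlonglongrightarrow> cfc g x'" by (simp add: eqQ)
  thus ?thesis using P(2) LIMSEQ_unique x'_def by blast
qed

lemma cfc_sum:
  fixes x :: "'a::cstar_algebra"
  assumes sa: "self_adjoint x" and fin: "finite I" and cg: "\<And>i. i \<in> I \<Longrightarrow> continuous_on UNIV (g i)"
  shows "cfc (\<lambda>t. \<Sum>i\<in>I. g i t) x = (\<Sum>i\<in>I. cfc (g i) x)"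
  using fin cg
proof (induction I rule: finite_induct)
  case empty
  then show ?case using cfc_const[OF sa, of 0] by simp
next
  case (insert i I)
  have "cfc (\<lambda>t. \<Sum>j\<in>insert i I. g j t) x = cfc (\<lambda>t. g i t + (\<Sum>j\<in>I. g j t)) x"
    using insert by simp
  also have "\<dots> = cfc (g i) x + cfc (\<lambda>t. \<Sum>j\<in>I. g j t) x"
    by (rule cfc_add[OF sa]) (use insert in \<open>auto intro!: continuous_intros\<close>)
  also have "\<dots> = (\<Sum>j\<in>insert i I. cfc (g j) x)" using insert by simp
  finally show ?case .
qed

lemma cfc_positive:
  fixes x :: "'a::cstar_algebra"
  assumes sa: "self_adjoint x" and cg: "continuous_on UNIV g" and g0: "\<And>t. g t \<ge> 0"
    and tau: "tracial_state \<tau>"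
  shows "Im (\<tau> (cfc g x)) = 0 \<and> Re (\<tau> (cfc g x)) \<ge> 0"
proof -
  have cs: "continuous_on UNIV (\<lambda>t. sqrt (g t))" by (intro continuous_intros cg)
  define h where "h = cfc (\<lambda>t. sqrt (g t)) x"
  have "cfc g x = cfc (\<lambda>t. sqrt (g t) * sqrt (g t)) x" using g0 by simp
  also have "\<dots> = h * h" unfolding h_def by (rule cfc_mult[OF sa cs cs])
  also have "\<dots> = cstar h * h" using cfc_selfadjoint[OF sa cs] by (simp add: h_def self_adjoint_def)
  finally have e: "cfc g x = cstar h * h" .
  have "\<forall>y. Im (\<tau> (cstar y * y)) = 0 \<and> Re (\<tau> (cstar y * y)) \<ge> 0"
    using tau unfolding tracial_state_def by blast
  thus ?thesis unfolding e by blast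
qed


lemma chi_alt:
  assumes "\<delta> > 0"
  shows "chi \<delta> t = max 0 (min 1 (2 - 2 * \<bar>t\<bar> / \<delta>))"
proof -
  consider "\<bar>t\<bar> < \<delta>/2" | "\<bar>t\<bar> > \<delta>" | "\<delta>/2 \<le> \<bar>t\<bar>" "\<bar>t\<bar> \<le> \<delta>" by linarith
  thus ?thesis
  proof cases
    case 1
    hence "2 * \<bar>t\<bar> / \<delta> < 1" using assms by (simp add: field_simps)
    thus ?thesis using 1 by (simp add: chi_def)
  next
    case 2
    hence "2 * \<bar>t\<bar> / \<delta> > 2" using assms by (simp add: field_simps)
    thus ?thesis using 2 by (simp add: chi_def)
  next
    case 3
    hence "2 * \<bar>t\<bar> / \<delta> \<ge> 1" "2 * \<bar>t\<bar> / \<delta> \<le> 2" using assms by (simp_all add: field_simps)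
    thus ?thesis using 3 assms by (simp add: chi_def)
  qed
qed

lemma chi_cont:
  assumes "\<delta> > 0" shows "continuous_on UNIV (chi \<delta>)"
proof -
  have "chi \<delta> = (\<lambda>t. max 0 (min 1 (2 - 2 * \<bar>t\<bar> / \<delta>)))" by (rule ext) (simp add: chi_alt assms)
  thus ?thesis using assms by (auto intro!: continuous_on_max continuous_on_min continuous_intros)
qed

lemma chi_nonneg: "\<delta> > 0 \<Longrightarrow> chi \<delta> t \<ge> 0"
  by (simp add: chi_alt)

lemma chi_le1: "\<delta> > 0 \<Longrightarrow> chi \<delta> t \<le> 1"
  by (simp add: chi_alt)

lemma chi_zero: "\<delta> > 0 \<Longrightarrow> \<bar>t\<bar> > \<delta> \<Longrightarrow> chi \<delta> t = 0"
  by (simp add: chi_def)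

lemma tau_sum:
  assumes "tracial_state \<tau>"
  shows "\<tau> (sum f A) = (\<Sum>i\<in>A. \<tau> (f i))"
proof -
  have add: "\<And>x y. \<tau> (x + y) = \<tau> x + \<tau> y" using assms by (simp add: tracial_state_def)
  have "\<tau> 0 = 0" using add[of 0 0] by simp
  thus ?thesis by (induction A rule: infinite_finite_induct) (auto simp: add)
qed

theorem corollary3p9:
  fixes f :: "'a::cstar_algebra" and \<epsilon> :: real
  assumes "self_adjoint f" and "\<epsilon> > 0"
  shows "\<exists>n::nat. \<exists>\<delta>>0. \<exists>fs :: nat \<Rightarrow> 'a. n \<ge> 1 \<and>
           (\<forall>i\<in>{1..n}. self_adjoint (fs i) \<and> norm (f - fs i) < \<epsilon>) \<and>
           (\<forall>\<tau>. tracial_state \<tau> \<longrightarrow>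
              (1 / of_nat n) * (\<Sum>i=1..n. \<tau> (cfc (chi \<delta>) (fs i))) \<in> {z. z \<in> \<real> \<and> Re z < \<epsilon>})"
proof -
  note sa = assms(1) and e = assms(2)
  obtain N where N: "inverse (real (Suc N)) < \<epsilon>" using reals_Archimedean[OF e] by blast
  define n where "n = Suc N"
  have n1: "n \<ge> 1" by (simp add: n_def)
  have ninv: "1 / real n < \<epsilon>" using N by (simp add: n_def inverse_eq_divide)
  define c where "c = (\<lambda>i::nat. real i * \<epsilon> / (real n + 1))"
  define \<delta> where "\<delta> = \<epsilon> / (4 * (real n + 1))"
  have d0: "\<delta> > 0" using e by (simp add: \<delta>_def)
  define fs where "fs = (\<lambda>i. f + c i *\<^sub>R (1::'a))"
  have safs: "self_adjoint (fs i)" for i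
    using sa by (simp add: fs_def self_adjoint_def cstar_add cstar_scaleR)
  have close: "norm (f - fs i) < \<epsilon>" if "i \<in> {1..n}" for i
  proof -
    have "norm (f - fs i) = \<bar>c i\<bar>" by (simp add: fs_def)
    also have "\<dots> = real i * \<epsilon> / (real n + 1)" using e by (simp add: c_def)
    also have "\<dots> < \<epsilon>"
    proof -
      have "real i \<le> real n" using that by simp
      hence m: "\<epsilon> * real i \<le> \<epsilon> * real n" using e by (intro mult_left_mono) auto
      have h: "real i * \<epsilon> < \<epsilon> * (real n + 1)"
      proof -
        have "real i * \<epsilon> = \<epsilon> * real i" by simp
        also have "\<dots> \<le> \<epsilon> * real n" by (rule m)
        also have "\<dots> < \<epsilon> * real n + \<epsilon>" using e by simp
        also have "\<dots> = \<epsilon> * (real n + 1)" by (simp add: distrib_left)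
        finally show ?thesis .
      qed
      show ?thesis by (subst pos_divide_less_eq) (use h in auto)
    qed
    finally show ?thesis .
  qed
  have sep: "chi \<delta> (t + c j) = 0" if "i \<in> {1..n}" "j \<in> {1..n}" "i \<noteq> j" "chi \<delta> (t + c i) \<noteq> 0" for i j t
  proof -
    have ti: "\<bar>t + c i\<bar> \<le> \<delta>" using that(4) chi_zero[OF d0] by force
    have "c i - c j = (real i - real j) * (\<epsilon> / (real n + 1))"
      by (simp add: c_def diff_divide_distrib left_diff_distrib)
    hence "\<bar>c i - c j\<bar> = \<bar>real i - real j\<bar> * (\<epsilon> / (real n + 1))"
      using e by (simp add: abs_mult)
    hence "\<bar>c i - c j\<bar> = \<bar>real i - real j\<bar> * \<epsilon> / (real n + 1)" by simp
    moreover have "\<bar>real i - real j\<bar> \<ge> 1" using that(3) by linarith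
    ultimately have "\<bar>c i - c j\<bar> \<ge> \<epsilon> / (real n + 1)"
      using e by (simp add: divide_right_mono)
    moreover have "\<epsilon> / (real n + 1) = 4 * \<delta>" by (simp add: \<delta>_def field_simps)
    ultimately have "\<bar>t + c j\<bar> > \<delta>" using ti d0 by linarith
    thus ?thesis by (rule chi_zero[OF d0])
  qed
  define S where "S = (\<lambda>t. \<Sum>i=1..n. chi \<delta> (t + c i))"
  have S1: "S t \<le> 1" for t
  proof (cases "\<exists>i\<in>{1..n}. chi \<delta> (t + c i) \<noteq> 0")
    case True
    then obtain i where i: "i \<in> {1..n}" "chi \<delta> (t + c i) \<noteq> 0" by blast
    have "S t = chi \<delta> (t + c i) + (\<Sum>j\<in>{1..n} - {i}. chi \<delta> (t + c j))"
      unfolding S_def using i(1) by (simp add: sum.remove)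
    also have "(\<Sum>j\<in>{1..n} - {i}. chi \<delta> (t + c j)) = 0"
      using sep[OF i(1) _ _ i(2)] by (intro sum.neutral) auto
    finally show ?thesis using chi_le1[OF d0] by simp
  next
    case False
    thus ?thesis by (simp add: S_def)
  qed
  have cchi: "continuous_on UNIV (\<lambda>t. chi \<delta> (t + c i))" for i
    by (rule continuous_on_compose2[OF chi_cont[OF d0]]) (auto intro: continuous_intros)
  have cS: "continuous_on UNIV S" unfolding S_def by (intro continuous_intros cchi)
  define G where "G = (\<lambda>t. 1 - S t)"
  have cG: "continuous_on UNIV G" unfolding G_def by (intro continuous_intros cS)
  have G0: "G t \<ge> 0" for t using S1[of t] by (simp add: G_def)
  have cfcS: "cfc S f = (\<Sum>i=1..n. cfc (chi \<delta>) (fs i))"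
  proof -
    have "cfc S f = (\<Sum>i=1..n. cfc (\<lambda>t. chi \<delta> (t + c i)) f)"
      unfolding S_def by (rule cfc_sum[OF sa]) (auto intro: cchi)
    also have "\<dots> = (\<Sum>i=1..n. cfc (chi \<delta>) (fs i))"
      by (intro sum.cong refl) (simp add: fs_def cfc_shift[OF sa chi_cont[OF d0]])
    finally show ?thesis .
  qed
  have one: "cfc G f + cfc S f = 1"
  proof -
    have "cfc G f + cfc S f = cfc (\<lambda>t. G t + S t) f" by (rule cfc_add[OF sa cG cS, symmetric])
    also have "(\<lambda>t. G t + S t) = (\<lambda>t. 1)" by (simp add: G_def)
    also have "cfc (\<lambda>t. 1) f = 1" using cfc_const[OF sa, of 1] by simp
    finally show ?thesis .
  qed
  show ?thesis
  proof (intro exI[of _ n] exI[of _ \<delta>] exI[of _ fs] conjI d0 n1 ballI allI impI)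
    fix i assume "i \<in> {1..n}"
    thus "self_adjoint (fs i)" "norm (f - fs i) < \<epsilon>" using safs close by auto
  next
    fix \<tau> :: "'a \<Rightarrow> complex" assume tau: "tracial_state \<tau>"
    have add: "\<And>x y. \<tau> (x + y) = \<tau> x + \<tau> y" and t1: "\<tau> 1 = 1"
      using tau by (simp_all add: tracial_state_def)
    define Z where "Z = (\<Sum>i=1..n. \<tau> (cfc (chi \<delta>) (fs i)))"
    have "\<tau> (cfc G f) + Z = 1"
      using arg_cong[OF one, of \<tau>] by (simp add: add t1 cfcS tau_sum[OF tau] Z_def)
    moreover have "Im (\<tau> (cfc G f)) = 0 \<and> Re (\<tau> (cfc G f)) \<ge> 0"
      by (rule cfc_positive[OF sa cG G0 tau])
    ultimately have Z: "Im Z = 0" "Re Z \<le> 1"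
      by (auto simp: complex_eq_iff)
    have "Im ((1 / of_nat n) * Z) = 0" using Z by simp
    moreover have "Re ((1 / of_nat n) * Z) = Re Z / real n" by simp
    moreover have "Re Z / real n \<le> 1 / real n" using Z n1 by (simp add: divide_right_mono)
    ultimately have W: "Im ((1 / of_nat n) * Z) = 0" "Re ((1 / of_nat n) * Z) < \<epsilon>"
      using ninv by linarith+
    have "(1 / of_nat n) * Z \<in> \<real>" using W(1) by (simp only: complex_is_Real_iff)
    thus "(1 / of_nat n) * (\<Sum>i=1..n. \<tau> (cfc (chi \<delta>) (fs i))) \<in> {z. z \<in> \<real> \<and> Re z < \<epsilon>}"
      using W(2) unfolding Z_def by blast
  qed
qed

end
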